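(* In the two-tier residency matching game described in the context, under the large market approximation, let $X\in[0,K]$ be the expected number of high hospitals listed by a high doctor under a symmetric strategy of the high doctors, and let $p(X,r)$ (resp. $p'(X,r)$) be the probability that a single application of a high doctor to a high (resp. low) hospital is accepted. Then $p(X,r)$ is strictly decreasing in $X$ for all $r>0$, and $p'(X,r)$ is strictly increasing in $X$.
   Context: Model: there are $n$ high-tier and $rn$ low-tier doctors ($r>0$), and $n$ high-tier and $rn$ low-tier hospitals, each with one position. Every hospital prefers every high doctor to every low doctor and every doctor prefers every high hospital to every low hospital; within a tier, preferences are independent uniformly random permutations. Each doctor submits a ranked list of exactly $K$ hospitals; hospitals submit full true rankings; doctor-proposing deferred acceptance is run. A doctor's pure strategy $(k,K-k)$ lists his $k$ most preferred high hospitals followed by his $K-k$ most preferred low hospitals; a symmetric strategy of high doctors in which a fraction $x$ play $(k+1,K-k-1)$ and $1-x$ play $(k,K-k)$ is summarized by $X=k+x$. Large market approximation: as $n\to\infty$ with $r,K$ fixed, each application of a high doctor to a high (low) hospital is accepted independently with probability $p$ ($p'$), these probabilities being determined by fixed-point equations stating that the expected number of matched doctors equals the expected number of hospitals receiving at least one application, where a hospital receiving on average $\lambda$ applications gets none with probability $e^{-\lambda}$ (e.g. if all high doctors list $k$ high hospitals, $(1-p)^k=e^{-(1-(1-p)^k)/p}$). *)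

theory Defs
  imports Complex_Main
begin

text \<open>Symmetric strategy X = k + x of the high doctors: a fraction x lists (k+1) high
  hospitals, a fraction 1-x lists k high hospitals (k = floor X, x = X - k).\<close>

definition strat_k :: "real \<Rightarrow> nat" where
  "strat_k X = nat \<lfloor>X\<rfloor>"

definition strat_x :: "real \<Rightarrow> real" where
  "strat_x X = X - real (strat_k X)"

text \<open>High tier, per high doctor (normalised by n): expected number matched to a high hospital,
  and expected number of applications sent to high hospitals, when each application is
  accepted independently with probability p.\<close>

definition high_matched :: "real \<Rightarrow> real \<Rightarrow> real" where
  "high_matched X p =
     strat_x X * (1 - (1 - p) ^ (strat_k X + 1)) + (1 - strat_x X) * (1 - (1 - p) ^ strat_k X)"

definition high_apps :: "real \<Rightarrow> real \<Rightarrow> real" where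
  "high_apps X p =
     strat_x X * (\<Sum>i<strat_k X + 1. (1 - p) ^ i) + (1 - strat_x X) * (\<Sum>i<strat_k X. (1 - p) ^ i)"

text \<open>Fixed-point equation: matched doctors = hospitals (n of them) receiving at least one
  application; mean applications per high hospital = high_apps.\<close>

definition high_fp :: "real \<Rightarrow> real \<Rightarrow> bool" where
  "high_fp X p \<longleftrightarrow> high_matched X p = 1 - exp (- high_apps X p)"

definition p_high :: "real \<Rightarrow> real" where
  "p_high X = (THE p. p \<in> {0<..1} \<and> high_fp X p)"

text \<open>Low tier: high doctors not matched in the high tier continue down their list of
  K-k (resp. K-k-1) low hospitals; each application accepted with probability p'.
  There are r n low hospitals, so mean applications per low hospital = low_apps / r.\<close>

definition low_matched :: "nat \<Rightarrow> real \<Rightarrow> real \<Rightarrow> real \<Rightarrow> real" where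
  "low_matched K X p p' =
     strat_x X * (1 - p) ^ (strat_k X + 1) * (1 - (1 - p') ^ (K - strat_k X - 1))
   + (1 - strat_x X) * (1 - p) ^ strat_k X * (1 - (1 - p') ^ (K - strat_k X))"

definition low_apps :: "nat \<Rightarrow> real \<Rightarrow> real \<Rightarrow> real \<Rightarrow> real" where
  "low_apps K X p p' =
     strat_x X * (1 - p) ^ (strat_k X + 1) * (\<Sum>i<K - strat_k X - 1. (1 - p') ^ i)
   + (1 - strat_x X) * (1 - p) ^ strat_k X * (\<Sum>i<K - strat_k X. (1 - p') ^ i)"

definition low_fp :: "real \<Rightarrow> nat \<Rightarrow> real \<Rightarrow> real \<Rightarrow> real \<Rightarrow> bool" where
  "low_fp r K X p p' \<longleftrightarrow> low_matched K X p p' = r * (1 - exp (- low_apps K X p p' / r))"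

definition p_low :: "real \<Rightarrow> nat \<Rightarrow> real \<Rightarrow> real" where
  "p_low r K X = (THE p'. p' \<in> {0<..1} \<and> low_fp r K X (p_high X) p')"

end

theory Submission
  imports Defs
begin

lemma exp_gt_lin: fixes y :: real assumes "y \<noteq> 0" shows "1 + y < exp y"
proof (cases "1 + y \<le> 0")
  case True then show ?thesis using exp_gt_zero[of y] by linarith
next
  case False
  have "(1 + y/2)^2 \<le> exp (y/2) ^ 2"
    using False by (intro power_mono) (auto simp: exp_ge_add_one_self[of "y/2", simplified])
  also have "exp (y/2) ^ 2 = exp y" by (simp add: power2_eq_square flip: exp_add)
  finally have "(1 + y/2)^2 \<le> exp y" .
  moreover have "1 + y < (1 + y/2)^2" using assms by (simp add: power2_eq_square field_simps) (metis not_real_square_gt_zero)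
  ultimately show ?thesis by linarith
qed

definition gfun :: "real \<Rightarrow> real" where "gfun t = (1 - exp (- t)) / t"

lemma gfun_decr: assumes "0 < t1" "t1 < t2" shows "gfun t2 < gfun t1"
proof -
  have "gfun t1 > gfun t2"
  proof (rule DERIV_neg_imp_decreasing[OF assms(2)])
    fix x assume x: "t1 \<le> x" "x \<le> t2"
    hence xp: "x > 0" using assms by linarith
    have "DERIV gfun x :> ((exp (-x)) * x - (1 - exp (-x))) / x^2"
      unfolding gfun_def using xp
      by (auto intro!: derivative_eq_intros simp: power2_eq_square field_simps)
    moreover have "((exp (-x)) * x - (1 - exp (-x))) / x^2 < 0"
    proof -
      have "1 + x < exp x" using exp_gt_lin[of x] xp by simp
      hence "exp (-x) * (1 + x) < exp (-x) * exp x" by simp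
      hence "exp (-x) * (1 + x) < 1" by (simp flip: exp_add)
      hence "(exp (-x)) * x - (1 - exp (-x)) < 0" by (simp add: algebra_simps)
      thus ?thesis using xp by (simp add: divide_neg_pos)
    qed
    ultimately show "\<exists>y. DERIV gfun x :> y \<and> y < 0" by blast
  qed
  thus ?thesis .
qed

definition Gf :: "real \<Rightarrow> real" where "Gf R = (1 - R) / (- ln R)"

lemma Gf_gfun: "0 < R \<Longrightarrow> Gf R = gfun (- ln R)"
  by (simp add: Gf_def gfun_def)

lemma Gf_strict: assumes "0 < a" "a < b" "b < 1" shows "Gf a < Gf b"
proof -
  have "0 < - ln b" using assms by simp
  moreover have "- ln b < - ln a" using assms by simp
  ultimately have "gfun (- ln a) < gfun (- ln b)" by (rule gfun_decr)
  thus ?thesis using assms by (simp add: Gf_gfun)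
qed

lemma Gf_mono: assumes "0 < a" "a \<le> b" "b < 1" shows "Gf a \<le> Gf b"
  using Gf_strict[of a b] assms by (cases "a = b") auto

lemma fp_char: assumes "0 < p" "R < 1"
  shows "R = exp (- (1 - R) / p) \<longleftrightarrow> 0 < R \<and> p = Gf R"
proof
  assume h: "R = exp (- (1 - R) / p)"
  hence R0: "0 < R" by (metis exp_gt_zero)
  have "ln R = - (1 - R) / p" using h by (metis ln_exp)
  hence "p = (1 - R) / (- ln R)" using assms R0 by (auto simp: field_simps)
  thus "0 < R \<and> p = Gf R" using R0 by (simp add: Gf_def)
next
  assume h: "0 < R \<and> p = Gf R"
  have ln: "ln R < 0" using h assms by simp
  have "p = (1 - R) / (- ln R)" using h by (simp add: Gf_def)
  hence "ln R = - (1 - R) / p" using ln assms by (auto simp: field_simps)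
  thus "R = exp (- (1 - R) / p)" using h by (metis exp_ln)
qed

lemma start_lemma: fixes w p c :: real
  assumes "0 < w" "w \<le> c * p" "0 < p" "p * (1 + c) < 1"
  shows "exp (- w / p) < 1 - w"
proof -
  have "1 + w/p \<le> exp (w/p)" by simp
  hence "exp (- w/p) \<le> 1 / (1 + w/p)" using assms
    by (simp add: exp_minus field_simps)
  also have "1 / (1 + w/p) = p / (p + w)" using assms by (simp add: field_simps)
  also have "p / (p + w) < 1 - w"
  proof -
    have "c * p + p < 1" using assms by (simp add: algebra_simps)
    hence "1 - p - w > 0" using assms by linarith
    hence "0 < w * (1 - p - w)" using assms by simp
    hence "p < (1 - w) * (p + w)" by (simp add: algebra_simps)
    thus ?thesis using assms by (simp add: field_simps)
  qed
  finally show ?thesis .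
qed

lemma fp_exists_unique:
  fixes \<rho> :: "real \<Rightarrow> real"
  assumes cont: "continuous_on {pa..1} \<rho>" and pa: "0 < pa" "pa \<le> 1"
    and mono: "\<And>p1 p2. 0 < p1 \<Longrightarrow> p1 \<le> p2 \<Longrightarrow> p2 \<le> 1 \<Longrightarrow> \<rho> p2 \<le> \<rho> p1"
    and lt1: "\<And>p. 0 < p \<Longrightarrow> p \<le> 1 \<Longrightarrow> \<rho> p < 1"
    and start: "exp (- (1 - \<rho> pa) / pa) < \<rho> pa"
  shows "\<exists>!p. p \<in> {0<..1} \<and> \<rho> p = exp (- (1 - \<rho> p) / p)"
proof (rule ex_ex1I)
  define W where "W p = \<rho> p - exp (- (1 - \<rho> p) / p)" for p
  have cW: "continuous_on {pa..1} W" unfolding W_def using pa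
    by (intro continuous_intros cont) auto
  have W1: "W 1 \<le> 0"
  proof -
    have "\<rho> 1 < 1" using lt1 by simp
    hence "1 + (- (1 - \<rho> 1)) < exp (- (1 - \<rho> 1))" by (intro exp_gt_lin) simp
    thus ?thesis by (simp add: W_def)
  qed
  have W0: "0 \<le> W pa" using start by (simp add: W_def)
  obtain p where "pa \<le> p" "p \<le> 1" "W p = 0" using IVT2'[OF W1 W0 pa(2) cW] by blast
  hence "p \<in> {0<..1} \<and> \<rho> p = exp (- (1 - \<rho> p) / p)" using pa by (auto simp: W_def)
  thus "\<exists>p. p \<in> {0<..1} \<and> \<rho> p = exp (- (1 - \<rho> p) / p)" by blast
next
  fix p1 p2 assume h1: "p1 \<in> {0<..1} \<and> \<rho> p1 = exp (- (1 - \<rho> p1) / p1)"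
    and h2: "p2 \<in> {0<..1} \<and> \<rho> p2 = exp (- (1 - \<rho> p2) / p2)"
  have c1: "0 < \<rho> p1 \<and> p1 = Gf (\<rho> p1)" using h1 fp_char lt1 by auto
  have c2: "0 < \<rho> p2 \<and> p2 = Gf (\<rho> p2)" using h2 fp_char lt1 by auto
  show "p1 = p2"
  proof (rule ccontr)
    assume "p1 \<noteq> p2"
    then consider "p1 < p2" | "p2 < p1" by linarith
    thus False
    proof cases
      case 1
      have "\<rho> p2 \<le> \<rho> p1" using mono[of p1 p2] h1 h2 1 by auto
      hence "Gf (\<rho> p2) \<le> Gf (\<rho> p1)" using c2 lt1 h1 by (intro Gf_mono) auto
      thus False using c1 c2 1 by linarith
    next
      case 2
      have "\<rho> p1 \<le> \<rho> p2" using mono[of p2 p1] h1 h2 2 by auto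
      hence "Gf (\<rho> p1) \<le> Gf (\<rho> p2)" using c1 lt1 h2 by (intro Gf_mono) auto
      thus False using c1 c2 2 by linarith
    qed
  qed
qed


lemma strat_props: assumes "0 \<le> X"
  shows "X = real (strat_k X) + strat_x X" "0 \<le> strat_x X" "strat_x X < 1"
proof -
  have f: "real (nat \<lfloor>X\<rfloor>) = of_int \<lfloor>X\<rfloor>" using assms by simp
  show "X = real (strat_k X) + strat_x X" by (simp add: strat_x_def)
  show "0 \<le> strat_x X" using f by (simp add: strat_x_def strat_k_def)
  show "strat_x X < 1" using f by (simp add: strat_x_def strat_k_def) linarith
qed

lemma strat_k_mono: "X1 \<le> X2 \<Longrightarrow> strat_k X1 \<le> strat_k X2"
  unfolding strat_k_def by (simp add: floor_mono nat_mono)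

lemma strat_k_lt: assumes "0 \<le> X" "X < real K" shows "strat_k X < K"
proof -
  have "real (strat_k X) \<le> X" using strat_props[OF assms(1)] by linarith
  thus ?thesis using assms by linarith
qed

definition Rh :: "real \<Rightarrow> real \<Rightarrow> real" where
  "Rh X p = (1 - p) ^ strat_k X * (1 - strat_x X * p)"

lemma hm_eq: "high_matched X p = 1 - Rh X p"
  by (simp add: high_matched_def Rh_def algebra_simps)

lemma geo: fixes s :: real shows "(1 - s) * (\<Sum>i<n. s ^ i) = 1 - s ^ n"
  by (simp add: one_diff_power_eq)

lemma ha_eq: "p * high_apps X p = high_matched X p"
proof -
  have "p * (\<Sum>i<n. (1 - p) ^ i) = 1 - (1-p)^n" for n
    using geo[of "1-p" n] by simp
  thus ?thesis unfolding high_apps_def high_matched_def by (simp add: algebra_simps)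
qed

lemma high_fp_iff: assumes "0 < p"
  shows "high_fp X p \<longleftrightarrow> Rh X p = exp (- (1 - Rh X p) / p)"
proof -
  have "high_apps X p = (1 - Rh X p) / p" using ha_eq[of p X] hm_eq[of X p] assms
    by (simp add: field_simps)
  thus ?thesis unfolding high_fp_def hm_eq by (simp add: minus_divide_left)
qed

lemma Rh_nonneg: assumes "0 \<le> X" "p \<le> 1" "0 \<le> p" shows "0 \<le> Rh X p"
proof -
  have "strat_x X * p \<le> 1" using strat_props[OF assms(1)] assms
    by (metis less_eq_real_def mult_le_one)
  thus ?thesis using assms unfolding Rh_def by simp
qed

lemma Rh_le1: assumes "0 \<le> X" "p \<le> 1" "0 \<le> p" shows "Rh X p \<le> 1"
proof -
  have "strat_x X * p \<le> 1" "0 \<le> strat_x X * p" using strat_props[OF assms(1)] assms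
    by (auto simp: mult_le_one)
  moreover have "(1-p)^strat_k X \<le> 1" "0 \<le> (1-p)^strat_k X" using assms by (auto simp: power_le_one)
  ultimately show ?thesis unfolding Rh_def by (simp add: mult_le_one)
qed

lemma Rh_mono_p: assumes "0 \<le> X" "0 \<le> p1" "p1 \<le> p2" "p2 \<le> 1" shows "Rh X p2 \<le> Rh X p1"
proof -
  have x: "0 \<le> strat_x X" "strat_x X < 1" using strat_props[OF assms(1)] by auto
  have "(1-p2)^strat_k X \<le> (1-p1)^strat_k X" using assms by (intro power_mono) auto
  moreover have "1 - strat_x X * p2 \<le> 1 - strat_x X * p1" using x assms by (simp add: mult_left_mono)
  moreover have "0 \<le> 1 - strat_x X * p2" using x assms by (smt (verit) mult_le_one)
  moreover have "0 \<le> (1-p1)^strat_k X" using assms by simp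
  ultimately show ?thesis unfolding Rh_def by (intro mult_mono) auto
qed

lemma Rh_lt1: assumes "0 < X" "0 < p" "p \<le> 1" shows "Rh X p < 1"
proof (cases "strat_k X = 0")
  case True
  hence "strat_x X = X" using strat_props[of X] assms by simp
  thus ?thesis using True assms unfolding Rh_def by simp
next
  case False
  have x: "0 \<le> strat_x X" "strat_x X < 1" using strat_props[of X] assms by auto
  have "(1-p)^strat_k X \<le> 1 - p" using False assms by (intro power_le_one_iff[THEN iffD2] power_decreasing[of 1, simplified]) auto
  moreover have "0 \<le> 1 - strat_x X * p" "1 - strat_x X * p \<le> 1" using x assms by (auto simp: mult_le_one)
  ultimately have "Rh X p \<le> 1 - p" unfolding Rh_def using assms
    by (metis diff_ge_0_iff_ge mult_right_le_one_le order.trans zero_le_power)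
  thus ?thesis using assms by linarith
qed


lemma Rh_mono_X: assumes "0 \<le> X1" "X1 < X2" "0 < p" "p \<le> 1" "0 < Rh X1 p"
  shows "Rh X2 p < Rh X1 p"
proof -
  define k1 x1 k2 x2 where "k1 = strat_k X1" "x1 = strat_x X1" "k2 = strat_k X2" "x2 = strat_x X2"
  have s1: "X1 = real k1 + x1" "0 \<le> x1" "x1 < 1" using strat_props[OF assms(1)] k1_x1_k2_x2_def by auto
  have s2: "X2 = real k2 + x2" "0 \<le> x2" "x2 < 1" using strat_props[of X2] assms k1_x1_k2_x2_def by auto
  have kle: "k1 \<le> k2" using strat_k_mono[of X1 X2] assms k1_x1_k2_x2_def by simp
  have R1: "Rh X1 p = (1-p)^k1 * (1 - x1 * p)" "Rh X2 p = (1-p)^k2 * (1 - x2 * p)"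
    using k1_x1_k2_x2_def by (auto simp: Rh_def)
  have qk1: "0 < (1-p)^k1"
  proof -
    have "0 \<le> (1-p)^k1" using assms by simp
    moreover have "(1-p)^k1 \<noteq> 0" using assms(5) R1(1) by (metis less_irrefl mult_zero_left)
    ultimately show ?thesis by linarith
  qed
  have x2p: "0 \<le> 1 - x2 * p" "1 - x2*p \<le> 1" using s2 assms by (auto simp: mult_le_one)
  show ?thesis
  proof (cases "k1 = k2")
    case True
    hence "x1 < x2" using s1 s2 assms by linarith
    hence "x1 * p < x2 * p" using assms by simp
    thus ?thesis using R1 True qk1 by simp
  next
    case False
    hence k: "Suc k1 \<le> k2" using kle by simp
    have "Rh X2 p \<le> (1-p)^k2" using R1 x2p assms by (simp add: mult_left_le)
    also have "\<dots> \<le> (1-p)^(Suc k1)" using k assms by (intro power_decreasing) auto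
    also have "\<dots> = (1-p)^k1 * (1 - p)" by simp
    also have "\<dots> < (1-p)^k1 * (1 - x1 * p)"
    proof -
      have "x1 * p < p" using s1 assms by simp
      thus ?thesis using qk1 by simp
    qed
    finally show ?thesis using R1 by simp
  qed
qed

lemma Rh_start: assumes "0 < X"
  shows "exp (- (1 - Rh X (1/(X+2))) / (1/(X+2))) < Rh X (1/(X+2))"
proof -
  define p where "p = 1/(X+2)"
  have p: "0 < p" "p \<le> 1" using assms by (auto simp: p_def field_simps)
  define k x where "k = strat_k X" "x = strat_x X"
  have s: "X = real k + x" "0 \<le> x" "x < 1" using strat_props[of X] assms k_x_def by auto
  have "1 - k * p \<le> (1 - p)^k" using Bernoulli_inequality[of "-p" k] p by simp
  moreover have "0 \<le> 1 - x * p" using s p by (smt (verit) mult_le_one)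
  ultimately have "(1 - k*p) * (1 - x*p) \<le> Rh X p" unfolding Rh_def k_x_def[symmetric]
    by (rule mult_right_mono)
  moreover have "1 - X * p \<le> (1 - k*p) * (1 - x*p)" using s p
    by (simp add: algebra_simps)
  ultimately have w: "1 - Rh X p \<le> X * p" by linarith
  have "exp (- (1 - Rh X p) / p) < 1 - (1 - Rh X p)"
  proof (rule start_lemma[OF _ w p(1)])
    show "0 < 1 - Rh X p" using Rh_lt1[OF assms p] by simp
    show "p * (1 + X) < 1" using assms by (simp add: p_def field_simps)
  qed
  thus ?thesis by (simp add: p_def)
qed

lemma p_high_props: assumes "0 < X"
  shows "0 < p_high X" "p_high X \<le> 1" "0 < Rh X (p_high X)" "Rh X (p_high X) < 1"
    "p_high X = Gf (Rh X (p_high X))"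
proof -
  have eu: "\<exists>!p. p \<in> {0<..1} \<and> Rh X p = exp (- (1 - Rh X p) / p)"
  proof (rule fp_exists_unique[where pa = "1/(X+2)"])
    show "continuous_on {1/(X+2)..1} (Rh X)" unfolding Rh_def by (intro continuous_intros)
    show "0 < 1/(X+2)" "1/(X+2) \<le> 1" using assms by (auto simp: field_simps)
    show "Rh X p2 \<le> Rh X p1" if "0 < p1" "p1 \<le> p2" "p2 \<le> 1" for p1 p2
      using Rh_mono_p[of X p1 p2] that assms by simp
    show "Rh X p < 1" if "0 < p" "p \<le> 1" for p using Rh_lt1 that assms by simp
    show "exp (- (1 - Rh X (1/(X+2))) / (1/(X+2))) < Rh X (1/(X+2))" by (rule Rh_start[OF assms])
  qed
  have eq: "(p \<in> {0<..1} \<and> high_fp X p) = (p \<in> {0<..1} \<and> Rh X p = exp (- (1 - Rh X p) / p))" for p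
    using high_fp_iff[of p X] by auto
  have "p_high X \<in> {0<..1} \<and> Rh X (p_high X) = exp (- (1 - Rh X (p_high X)) / p_high X)"
    unfolding p_high_def eq by (rule theI'[OF eu])
  moreover have "Rh X (p_high X) < 1" using calculation Rh_lt1 assms by auto
  ultimately show "0 < p_high X" "p_high X \<le> 1" "0 < Rh X (p_high X)" "Rh X (p_high X) < 1"
    "p_high X = Gf (Rh X (p_high X))" using fp_char by auto
qed

lemma high_mono: assumes "0 < X1" "X1 < X2" shows "p_high X2 < p_high X1"
proof (rule ccontr)
  assume "\<not> ?thesis"
  hence le: "p_high X1 \<le> p_high X2" by simp
  note h1 = p_high_props[OF assms(1)] and h2 = p_high_props[of X2]
  have X2: "0 < X2" using assms by linarith
  have "Rh X2 (p_high X2) \<le> Rh X2 (p_high X1)" using Rh_mono_p[of X2 "p_high X1" "p_high X2"] le h1 h2[OF X2] X2 by simp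
  also have "\<dots> < Rh X1 (p_high X1)" using Rh_mono_X[of X1 X2 "p_high X1"] assms h1 by simp
  finally have "Gf (Rh X2 (p_high X2)) < Gf (Rh X1 (p_high X1))"
    using h1 h2[OF X2] by (intro Gf_strict) auto
  thus False using h1 h2[OF X2] le by linarith
qed

lemma R_mono: assumes "0 \<le> X1" "X1 < X2"
  shows "Rh X2 (p_high X2) < Rh X1 (p_high X1)"
proof (cases "X1 = 0")
  case True
  have "Rh X1 (p_high X1) = 1" using True by (simp add: Rh_def strat_k_def strat_x_def)
  thus ?thesis using p_high_props[of X2] assms True by simp
next
  case False
  hence X1: "0 < X1" using assms by simp
  have X2: "0 < X2" using assms X1 by linarith
  note h1 = p_high_props[OF X1] and h2 = p_high_props[OF X2]
  show ?thesis
  proof (rule ccontr)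
    assume "\<not> ?thesis"
    hence "Gf (Rh X1 (p_high X1)) \<le> Gf (Rh X2 (p_high X2))" using h1 h2 by (intro Gf_mono) auto
    thus False using h1 h2 high_mono[OF X1 assms(2)] by linarith
  qed
qed


definition Lf :: "real \<Rightarrow> real \<Rightarrow> nat \<Rightarrow> real \<Rightarrow> real" where
  "Lf a b m p = a * (1 - (1-p)^m) + b * (1 - (1-p)^(Suc m))"

lemma one_minus_pow_bounds: fixes p :: real assumes "0 \<le> p" "p \<le> 1"
  shows "0 \<le> 1 - (1-p)^n" "1 - (1-p)^n \<le> n * p"
proof -
  show "0 \<le> 1 - (1-p)^n" using assms by (simp add: power_le_one)
  show "1 - (1-p)^n \<le> n * p" using Bernoulli_inequality[of "-p" n] assms by simp
qed

lemma Lf_alt1: "Lf a b m p = (a + b) * (1 - (1-p)^Suc m) - a * (1-p)^m * p"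
  by (simp add: Lf_def algebra_simps)
lemma Lf_alt2: "Lf a b m p = (a + b) * (1 - (1-p)^m) + b * (1-p)^m * p"
  by (simp add: Lf_def algebra_simps)

lemma Lf_pos: assumes "0 \<le> a" "0 < b" "0 < p" "p \<le> 1" shows "0 < Lf a b m p"
proof -
  have "(1-p)^Suc m \<le> 1 - p" unfolding power_Suc using assms by (intro mult_left_le power_le_one) auto
  hence "0 < 1 - (1-p)^Suc m" using assms by linarith
  moreover have "0 \<le> 1 - (1-p)^m" using one_minus_pow_bounds assms by simp
  ultimately show ?thesis unfolding Lf_def using assms by (simp add: add_nonneg_pos)
qed

lemma Lf_mono: assumes "0 \<le> a" "0 \<le> b" "0 \<le> p1" "p1 \<le> p2" "p2 \<le> 1"
  shows "Lf a b m p1 \<le> Lf a b m p2"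
proof -
  have h: "(1-p2)^n \<le> (1-p1)^n" for n using assms by (intro power_mono) auto
  have "a * (1 - (1-p1)^m) \<le> a * (1 - (1-p2)^m)" using h[of m] assms by (intro mult_left_mono) auto
  moreover have "b * (1 - (1-p1)^Suc m) \<le> b * (1 - (1-p2)^Suc m)" using h[of "Suc m"] assms
    by (intro mult_left_mono) auto
  ultimately show ?thesis unfolding Lf_def by linarith
qed

lemma Lf_bound: assumes "0 \<le> a" "0 \<le> b" "a + b \<le> 1" "0 \<le> p" "p \<le> 1"
  shows "Lf a b m p \<le> real (Suc m) * p"
proof -
  have "real m * p \<le> real (Suc m) * p" using assms by (intro mult_right_mono) auto
  hence "1 - (1-p)^m \<le> real (Suc m) * p" using one_minus_pow_bounds(2)[OF assms(4,5), of m] by linarith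
  moreover have "1 - (1-p)^Suc m \<le> real (Suc m) * p" using one_minus_pow_bounds[OF assms(4,5), of "Suc m"] by simp
  ultimately have "Lf a b m p \<le> a * (real (Suc m) * p) + b * (real (Suc m) * p)"
    unfolding Lf_def using assms by (intro add_mono mult_left_mono) auto
  also have "\<dots> = (a+b) * (real (Suc m) * p)" by (simp add: algebra_simps)
  also have "\<dots> \<le> real (Suc m) * p" using assms by (simp add: mult_left_le_one_le)
  finally show ?thesis .
qed

lemma Lf_cmp_same: assumes "a1 \<le> a2" "a2 + b2 < a1 + b1" "0 < p" "p \<le> 1"
  shows "Lf a2 b2 m p < Lf a1 b1 m p"
proof -
  have "(1-p)^Suc m \<le> 1 - p" unfolding power_Suc using assms by (intro mult_left_le power_le_one) auto
  hence pos: "0 < 1 - (1-p)^Suc m" using assms by linarith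
  have "(a2 + b2) * (1 - (1-p)^Suc m) < (a1 + b1) * (1 - (1-p)^Suc m)" using pos assms by simp
  moreover have "a1 * (1-p)^m * p \<le> a2 * (1-p)^m * p" using assms by (intro mult_right_mono) auto
  ultimately show ?thesis unfolding Lf_alt1 by linarith
qed

lemma Lf_cmp_diff: assumes "0 \<le> a2" "0 \<le> b1" "0 \<le> a2 + b2" "a2 + b2 < a1 + b1" "0 < p" "p \<le> 1"
  "Suc m2 \<le> m1"
  shows "Lf a2 b2 m2 p < Lf a1 b1 m1 p"
proof -
  have s: "0 \<le> 1 - p" "1 - p < 1" using assms by auto
  have "(1-p)^m1 \<le> 1 - p" using s assms by (intro power_le_one_iff[THEN iffD2] power_decreasing[of 1, simplified]) auto
  hence pos: "0 < 1 - (1-p)^m1" using assms by linarith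
  have "Lf a2 b2 m2 p \<le> (a2 + b2) * (1 - (1-p)^Suc m2)" unfolding Lf_alt1 using assms by simp
  also have "\<dots> \<le> (a2 + b2) * (1 - (1-p)^m1)"
  proof -
    have "(1-p)^m1 \<le> (1-p)^Suc m2" using assms s by (intro power_decreasing) auto
    thus ?thesis using assms by (intro mult_left_mono) auto
  qed
  also have "\<dots> < (a1 + b1) * (1 - (1-p)^m1)" using pos assms by simp
  also have "\<dots> \<le> Lf a1 b1 m1 p" unfolding Lf_alt2 using assms s by simp
  finally show ?thesis .
qed


definition aa :: "real \<Rightarrow> real" where
  "aa X = strat_x X * (1 - p_high X)^(strat_k X + 1)"
definition bb :: "real \<Rightarrow> real" where
  "bb X = (1 - strat_x X) * (1 - p_high X)^(strat_k X)"
definition mm :: "nat \<Rightarrow> real \<Rightarrow> nat" where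
  "mm K X = K - strat_k X - 1"

lemma lm_eq: assumes "strat_k X < K"
  shows "low_matched K X (p_high X) p' = Lf (aa X) (bb X) (mm K X) p'"
proof -
  have "K - strat_k X = Suc (mm K X)" using assms by (simp add: mm_def)
  thus ?thesis unfolding low_matched_def Lf_def aa_def bb_def mm_def
    by (simp add: algebra_simps)
qed

lemma la_eq: "p' * low_apps K X P p' = low_matched K X P p'"
proof -
  have g: "p' * (\<Sum>i<n. (1 - p') ^ i) = 1 - (1-p')^n" for n
    using geo[of "1-p'" n] by simp
  define A B where "A = strat_x X * (1 - P) ^ (strat_k X + 1)" "B = (1 - strat_x X) * (1 - P) ^ strat_k X"
  define m1 m0 where "m1 = K - strat_k X - 1" "m0 = K - strat_k X"
  have "p' * low_apps K X P p' = A * (p' * (\<Sum>i<m1. (1 - p') ^ i)) + B * (p' * (\<Sum>i<m0. (1 - p') ^ i))"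
    unfolding low_apps_def A_B_def m1_m0_def by (simp add: algebra_simps)
  also have "\<dots> = A * (1 - (1-p')^m1) + B * (1 - (1-p')^m0)" unfolding g ..
  also have "\<dots> = low_matched K X P p'" unfolding low_matched_def A_B_def m1_m0_def by (simp add: mult.assoc)
  finally show ?thesis .
qed

lemma low_fp_iff: assumes "0 < r" "0 < p'" "strat_k X < K"
  shows "low_fp r K X (p_high X) p' \<longleftrightarrow>
    (1 - Lf (aa X) (bb X) (mm K X) p' / r) = exp (- (1 - (1 - Lf (aa X) (bb X) (mm K X) p' / r)) / p')"
proof -
  define L where "L = Lf (aa X) (bb X) (mm K X) p'"
  have lm: "low_matched K X (p_high X) p' = L" using lm_eq[OF assms(3)] L_def by simp
  have la: "low_apps K X (p_high X) p' = L / p'" using la_eq[of p' K X "p_high X"] lm assms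
    by (simp add: field_simps)
  have "low_fp r K X (p_high X) p' \<longleftrightarrow> L = r * (1 - exp (- (L / p') / r))"
    unfolding low_fp_def lm la ..
  also have "\<dots> \<longleftrightarrow> 1 - L / r = exp (- (L / p') / r)" using assms
    by (auto simp: field_simps)
  also have "- (L / p') / r = - (1 - (1 - L / r)) / p'" by simp
  finally show ?thesis unfolding L_def .
qed

lemma ab_facts: assumes "0 \<le> X"
  shows "0 \<le> aa X" "0 < bb X" "aa X + bb X = Rh X (p_high X)" "Rh X (p_high X) \<le> 1"
proof -
  have s: "0 \<le> strat_x X" "strat_x X < 1" using strat_props[OF assms] by auto
  show ab: "aa X + bb X = Rh X (p_high X)" unfolding aa_def bb_def Rh_def by (simp add: algebra_simps)
  have "0 \<le> aa X \<and> 0 < bb X \<and> Rh X (p_high X) \<le> 1"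
  proof (cases "X = 0")
    case True
    hence "strat_x X = 0" "strat_k X = 0" by (auto simp: strat_x_def strat_k_def)
    thus ?thesis by (simp add: aa_def bb_def Rh_def)
  next
    case False
    hence X: "0 < X" using assms by simp
    note h = p_high_props[OF X]
    have q: "0 \<le> 1 - p_high X" using h by simp
    have "(1 - p_high X)^strat_k X \<noteq> 0" using h(3) unfolding Rh_def by (metis less_irrefl mult_zero_left)
    hence qk: "0 < (1 - p_high X)^strat_k X" using q by (simp add: order_le_neq_trans)
    show ?thesis using s q qk h Rh_le1[of X "p_high X"] X unfolding aa_def bb_def by simp
  qed
  thus "0 \<le> aa X" "0 < bb X" "Rh X (p_high X) \<le> 1" by auto
qed

lemma p_low_props: assumes r: "0 < r" and X: "0 \<le> X" "X < real K"
  defines "\<rho> \<equiv> \<lambda>p. 1 - Lf (aa X) (bb X) (mm K X) p / r"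
  shows "0 < p_low r K X" "p_low r K X \<le> 1" "0 < \<rho> (p_low r K X)" "\<rho> (p_low r K X) < 1"
    "p_low r K X = Gf (\<rho> (p_low r K X))"
proof -
  have k: "strat_k X < K" using strat_k_lt X by simp
  note ab = ab_facts[OF X(1)]
  have lt1: "\<rho> p < 1" if "0 < p" "p \<le> 1" for p
    using Lf_pos[OF ab(1,2) that, of "mm K X"] r by (simp add: \<rho>_def)
  define c where "c = real (Suc (mm K X)) / r"
  have c0: "0 \<le> c" using r by (simp add: c_def)
  define pa where "pa = 1 / (2 + c)"
  have pa: "0 < pa" "pa \<le> 1" using c0 by (auto simp: pa_def field_simps)
  have eu: "\<exists>!p. p \<in> {0<..1} \<and> \<rho> p = exp (- (1 - \<rho> p) / p)"
  proof (rule fp_exists_unique[where pa = pa])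
    show "continuous_on {pa..1} \<rho>" unfolding \<rho>_def Lf_def using r by (intro continuous_intros) auto
    show "0 < pa" "pa \<le> 1" using pa by auto
    show "\<rho> p2 \<le> \<rho> p1" if "0 < p1" "p1 \<le> p2" "p2 \<le> 1" for p1 p2
      using Lf_mono[of "aa X" "bb X" p1 p2 "mm K X"] that ab r unfolding \<rho>_def
      by (simp add: divide_right_mono)
    show "\<rho> p < 1" if "0 < p" "p \<le> 1" for p using lt1 that by simp
    show "exp (- (1 - \<rho> pa) / pa) < \<rho> pa"
    proof -
      define w where "w = Lf (aa X) (bb X) (mm K X) pa / r"
      have w0: "0 < w" using Lf_pos[OF ab(1,2) pa, of "mm K X"] r by (simp add: w_def)
      have "Lf (aa X) (bb X) (mm K X) pa \<le> real (Suc (mm K X)) * pa"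
        using Lf_bound[OF ab(1) less_imp_le[OF ab(2)] _ less_imp_le[OF pa(1)] pa(2)] ab by simp
      hence wc: "w \<le> c * pa" using r by (simp add: w_def c_def field_simps)
      have "pa * (1 + c) < 1" using c0 by (simp add: pa_def field_simps)
      from start_lemma[OF w0 wc pa(1) this] show ?thesis by (simp add: \<rho>_def w_def)
    qed
  qed
  have eq: "(p \<in> {0<..1} \<and> low_fp r K X (p_high X) p) = (p \<in> {0<..1} \<and> \<rho> p = exp (- (1 - \<rho> p) / p))" for p
    using low_fp_iff[OF r _ k, of p] unfolding \<rho>_def by auto
  have "p_low r K X \<in> {0<..1} \<and> \<rho> (p_low r K X) = exp (- (1 - \<rho> (p_low r K X)) / p_low r K X)"
    unfolding p_low_def eq by (rule theI'[OF eu])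
  moreover have "\<rho> (p_low r K X) < 1" using calculation lt1 by auto
  ultimately show "0 < p_low r K X" "p_low r K X \<le> 1" "0 < \<rho> (p_low r K X)" "\<rho> (p_low r K X) < 1"
    "p_low r K X = Gf (\<rho> (p_low r K X))" using fp_char by auto
qed


lemma Lf_cmp: assumes "0 \<le> X1" "X1 < X2" "X2 < real K" "0 < p" "p \<le> 1"
  shows "Lf (aa X2) (bb X2) (mm K X2) p < Lf (aa X1) (bb X1) (mm K X1) p"
proof -
  have X2: "0 < X2" using assms by linarith
  note ab1 = ab_facts[OF assms(1)] and ab2 = ab_facts[of X2]
  have ab2': "0 \<le> aa X2" "0 < bb X2" "aa X2 + bb X2 = Rh X2 (p_high X2)" using ab2 X2 by auto
  have R: "aa X2 + bb X2 < aa X1 + bb X1" using R_mono[OF assms(1,2)] ab1 ab2' by simp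
  have s1: "X1 = real (strat_k X1) + strat_x X1" "0 \<le> strat_x X1" using strat_props[OF assms(1)] by auto
  have s2: "X2 = real (strat_k X2) + strat_x X2" using strat_props[of X2] X2 by auto
  have kle: "strat_k X1 \<le> strat_k X2" using strat_k_mono assms by simp
  have k2: "strat_k X2 < K" using strat_k_lt[of X2 K] X2 assms by simp
  show ?thesis
  proof (cases "strat_k X1 = strat_k X2")
    case True
    have mm: "mm K X2 = mm K X1" using True by (simp add: mm_def)
    have "aa X1 \<le> aa X2"
    proof (cases "X1 = 0")
      case True
      hence "aa X1 = 0" by (simp add: aa_def strat_x_def strat_k_def)
      thus ?thesis using ab2' by simp
    next
      case False
      hence X1: "0 < X1" using assms by simp
      have x: "strat_x X1 \<le> strat_x X2" using s1 s2 True assms by linarith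
      have P: "p_high X2 < p_high X1" using high_mono[OF X1 assms(2)] .
      have q: "0 \<le> 1 - p_high X1" using p_high_props[OF X1] by simp
      have "(1 - p_high X1)^(strat_k X1 + 1) \<le> (1 - p_high X2)^(strat_k X2 + 1)"
        unfolding True using P q by (intro power_mono) auto
      thus ?thesis unfolding aa_def using x s1 q by (intro mult_mono) auto
    qed
    thus ?thesis using Lf_cmp_same[OF _ R assms(4,5)] mm by simp
  next
    case False
    hence "strat_k X1 < strat_k X2" using kle by simp
    hence m: "Suc (mm K X2) \<le> mm K X1" using k2 by (simp add: mm_def)
    show ?thesis using Lf_cmp_diff[OF ab2'(1) _ _ R assms(4,5) m] ab1 ab2' by simp
  qed
qed

lemma low_mono: assumes r: "0 < r" and X: "0 \<le> X1" "X1 < X2" "X2 < real K"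
  shows "p_low r K X1 < p_low r K X2"
proof (rule ccontr)
  assume "\<not> ?thesis"
  hence le: "p_low r K X2 \<le> p_low r K X1" by simp
  define p1 p2 where "p1 = p_low r K X1" "p2 = p_low r K X2"
  define \<rho>1 \<rho>2 where "\<rho>1 = (\<lambda>p. 1 - Lf (aa X1) (bb X1) (mm K X1) p / r)"
    "\<rho>2 = (\<lambda>p. 1 - Lf (aa X2) (bb X2) (mm K X2) p / r)"
  have h1: "0 < p1" "p1 \<le> 1" "0 < \<rho>1 p1" "\<rho>1 p1 < 1" "p1 = Gf (\<rho>1 p1)"
    using p_low_props[OF r X(1), of K] X unfolding p1_p2_def \<rho>1_\<rho>2_def by auto
  have X2': "0 \<le> X2" using X by simp
  have h2: "0 < p2" "p2 \<le> 1" "0 < \<rho>2 p2" "\<rho>2 p2 < 1" "p2 = Gf (\<rho>2 p2)"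
    using p_low_props[OF r X2' X(3)] unfolding p1_p2_def \<rho>1_\<rho>2_def by auto
  have ab2: "0 \<le> aa X2" "0 \<le> bb X2" using ab_facts[OF X2'] by auto
  have "Lf (aa X2) (bb X2) (mm K X2) p2 \<le> Lf (aa X2) (bb X2) (mm K X2) p1"
    using Lf_mono[OF ab2] h1 h2 le p1_p2_def by auto
  hence a: "\<rho>2 p1 \<le> \<rho>2 p2" using r unfolding \<rho>1_\<rho>2_def by (simp add: divide_right_mono)
  have "Lf (aa X2) (bb X2) (mm K X2) p1 < Lf (aa X1) (bb X1) (mm K X1) p1"
    using Lf_cmp[OF X h1(1,2)] .
  hence "\<rho>1 p1 < \<rho>2 p1" using r unfolding \<rho>1_\<rho>2_def by (simp add: divide_strict_right_mono)
  hence "\<rho>1 p1 < \<rho>2 p2" using a by linarith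
  hence "Gf (\<rho>1 p1) < Gf (\<rho>2 p2)" using h1 h2 by (intro Gf_strict) auto
  thus False using h1 h2 le p1_p2_def by linarith
qed

theorem claim1:
  fixes r :: real and K :: nat
  assumes "r > 0"
  shows "(\<forall>X1 X2. 0 < X1 \<and> X1 < X2 \<and> X2 \<le> real K \<longrightarrow> p_high X2 < p_high X1)
       \<and> (\<forall>X1 X2. 0 \<le> X1 \<and> X1 < X2 \<and> X2 < real K \<longrightarrow> p_low r K X1 < p_low r K X2)"
  using high_mono low_mono[OF assms] by blast

end
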